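(* Consider the following model. A principal P and an agent A interact over two periods $t\in\{1,2\}$. States $\omega_t\in\{0,1\}$ satisfy $\Pr[\omega_1=1]=\mu_0\in(0,1)$ and $\Pr[\omega_2=\omega\mid\omega_1=\omega]=\rho\in(1/2,1)$; neither player observes states directly. In each period A chooses $e_t\in\{0,1\}$; if $e_t=1$ he observes $\omega_t$, if $e_t=0$ he observes $\omega_t$ with probability $\pi\in(0,1)$ and nothing otherwise. A then reports $r_t\in\{\varnothing,\omega_t\}$ if he observed $\omega_t$ and $r_t=\varnothing$ otherwise. At the end of period 2, P chooses $x$. Payoffs: P gets $\mathbb{1}[x=\omega_2]-k(e_1+e_2)$, A gets $x-c(e_1+e_2)$, $c,k>0$. Let $\kappa=k/(1-\pi)$, $\gamma=c/(1-\pi)$, $\mu_2(\varnothing)=\rho\mu_0+(1-\rho)(1-\mu_0)$, and assume $$\kappa\in(1-\rho,\min\{\mu_2(\varnothing),1-\mu_2(\varnothing)\}],\qquad \gamma\in(1-\rho,\mu_2(\varnothing)].$$ Consider the mechanism $m^*$ with $\sigma_1=0$, $\sigma_2(r_1)=\mathbb{1}[r_1=\varnothing]$, and $\hat x(r_1,1)=1$, $\hat x(r_1,0)=0$ for all $r_1$, $\hat x(1,\varnothing)=1$, $\hat x(0,\varnothing)=0$, $\hat x(\varnothing,\varnothing)=0$. Consider A's deviation strategy: test in period 1; report $r_1=1$ if $\omega_1=1$ and $r_1=\varnothing$ otherwise; never test in period 2; in period 2 report $r_2=1$ if $\omega_2=1$ is observed and $r_2=\varnothing$ otherwise. Then this deviation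 gives A a strictly higher expected payoff than his best strategy among those that do not test in period 1 if and only if $$\gamma<\bar\gamma:=\frac{(1-\rho)[\mu_0-(1-\mu_0)(1-\pi)]}{\pi}.$$
   Context: The mechanism $m^*$ is the baseline (first-best, efficient-assignment) mechanism for this range of $\kappa$, modified so that no report after a requested test yields assignment $0$. The principal commits to the mechanism; A best-responds to it. *)

theory Defs
  imports Complex_Main
begin

text \<open>States are booleans (True = 1, False = 0). An observation or a report is a
  bool option: None = nothing observed / empty report, Some w = state w observed / reported.\<close>

type_synonym obs = "bool option"
type_synonym report = "bool option"

text \<open>A pure strategy of the agent:
  e1 (test in period 1?), r1 (period-1 report as function of the period-1 observation),
  e2 (test in period 2?, as function of the period-1 observation, which determines r1),
  r2 (period-2 report as function of both observations).\<close>
type_synonym strategy =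
  "bool \<times> (obs \<Rightarrow> report) \<times> (obs \<Rightarrow> bool) \<times> (obs \<Rightarrow> obs \<Rightarrow> report)"

definition feasible_report :: "obs \<Rightarrow> report \<Rightarrow> bool" where
  "feasible_report ob r \<longleftrightarrow> r = None \<or> r = ob"

definition feasible_strategy :: "strategy \<Rightarrow> bool" where
  "feasible_strategy s = (case s of (e1, r1, e2, r2) \<Rightarrow>
     (\<forall>o1. feasible_report o1 (r1 o1)) \<and> (\<forall>o1 o2. feasible_report o2 (r2 o1 o2)))"

definition prior :: "real \<Rightarrow> bool \<Rightarrow> real" where
  "prior \<mu>0 w = (if w then \<mu>0 else 1 - \<mu>0)"

definition trans_prob :: "real \<Rightarrow> bool \<Rightarrow> bool \<Rightarrow> real" where
  "trans_prob \<rho> w w' = (if w' = w then \<rho> else 1 - \<rho>)"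

definition obs_prob :: "real \<Rightarrow> bool \<Rightarrow> bool \<Rightarrow> obs \<Rightarrow> real" where
  "obs_prob \<pi> e w ob =
     (if ob = Some w then (if e then 1 else \<pi>)
      else if ob = None then (if e then 0 else 1 - \<pi>) else 0)"

definition xhat :: "report \<Rightarrow> report \<Rightarrow> real" where
  "xhat r1 r2 = (case r2 of Some b \<Rightarrow> of_bool b
                 | None \<Rightarrow> (case r1 of Some b \<Rightarrow> of_bool b | None \<Rightarrow> 0))"

definition all_obs :: "obs set" where
  "all_obs = {None, Some False, Some True}"

definition agent_payoff :: "real \<Rightarrow> real \<Rightarrow> real \<Rightarrow> real \<Rightarrow> strategy \<Rightarrow> real" where
  "agent_payoff \<mu>0 \<rho> \<pi> c s = (case s of (e1, r1, e2, r2) \<Rightarrow>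
     (\<Sum>w1\<in>(UNIV::bool set). \<Sum>w2\<in>(UNIV::bool set). \<Sum>o1\<in>all_obs. \<Sum>o2\<in>all_obs.
        prior \<mu>0 w1 * trans_prob \<rho> w1 w2 * obs_prob \<pi> e1 w1 o1 * obs_prob \<pi> (e2 o1) w2 o2 *
        (xhat (r1 o1) (r2 o1 o2) - c * (of_bool e1 + of_bool (e2 o1)))))"

definition deviation :: strategy where
  "deviation = (True,
                (\<lambda>ob. if ob = Some True then Some True else None),
                (\<lambda>_. False),
                (\<lambda>_ o2. if o2 = Some True then Some True else None))"

end

theory Submission imports Defs begin
definition inner :: "real \<Rightarrow> real \<Rightarrow> real \<Rightarrow> real \<Rightarrow> obs \<Rightarrow> report \<Rightarrow> bool \<Rightarrow> (obs \<Rightarrow> report) \<Rightarrow> real" where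
 "inner \<mu>0 \<rho> \<pi> c o1 a e R = (\<Sum>w1\<in>(UNIV::bool set). \<Sum>w2\<in>(UNIV::bool set). \<Sum>o2\<in>all_obs.
        prior \<mu>0 w1 * trans_prob \<rho> w1 w2 * obs_prob \<pi> False w1 o1 * obs_prob \<pi> e w2 o2 *
        (xhat a (R o2) - c * (of_bool False + of_bool e)))"

lemma inner_None:
  assumes "R None = None" "R (Some False) = None \<or> R (Some False) = Some False"
    "R (Some True) = None \<or> R (Some True) = Some True"
   and p: "0 < \<mu>0" "\<mu>0 < 1" "0 < \<rho>" "\<rho> < 1" "0 < \<pi>" "\<pi> < 1" "0 < c"
   "c \<le> (1-\<pi>) * (\<rho> * \<mu>0 + (1 - \<rho>) * (1 - \<mu>0))"
  shows "inner \<mu>0 \<rho> \<pi> c None None e R \<le> (1-\<pi>) * ((\<rho> * \<mu>0 + (1 - \<rho>) * (1 - \<mu>0)) - c)"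
proof -
  have f1: "(1-\<pi>) * (c - (1-\<pi>) * (\<rho> * \<mu>0 + (1 - \<rho>) * (1 - \<mu>0))) \<le> 0"
    using p by (intro mult_nonneg_nonpos) auto
  have f2: "0 \<le> (1-\<pi>) * (\<rho> * \<mu>0 + (1 - \<rho>) * (1 - \<mu>0))" "0 \<le> \<pi> * c" using p by simp_all
  show ?thesis
  using assms(1-3) unfolding inner_def all_obs_def
  apply (cases e; elim disjE; simp add: UNIV_bool prior_def trans_prob_def obs_prob_def xhat_def)
  using f1 f2 p apply (simp_all add: algebra_simps) apply (use f1 f2 p in linarith)+ done
qed

lemma inner_SF:
  assumes "a = None \<or> a = Some False" "R None = None" "R (Some False) = None \<or> R (Some False) = Some False"
    "R (Some True) = None \<or> R (Some True) = Some True"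
   and p: "0 < \<mu>0" "\<mu>0 < 1" "0 < \<rho>" "\<rho> < 1" "0 < \<pi>" "\<pi> < 1" "0 < c"
   "(1-\<rho>) * (1-\<pi>) < c"
  shows "inner \<mu>0 \<rho> \<pi> c (Some False) a e R \<le> \<pi> * \<pi> * (1-\<mu>0) * (1-\<rho>)"
proof -
  have f1: "(1-\<mu>0) * \<pi> * ((1-\<rho>) * (1-\<pi>) - c) \<le> 0"
    using p by (intro mult_nonneg_nonpos) auto
  have f2: "0 \<le> (1-\<mu>0) * \<pi> * \<pi> * (1-\<rho>)" "0 \<le> (1-\<mu>0) * \<pi> * c" "0 \<le> (1-\<mu>0) * \<pi> * \<rho>"
    "0 \<le> (1-\<mu>0) * \<pi> * c + (1-\<mu>0) * \<pi> * \<pi> * (1-\<rho>)" using p by simp_all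
  show ?thesis
  using assms(1-4) unfolding inner_def all_obs_def
  apply (cases e; elim disjE; simp add: UNIV_bool prior_def trans_prob_def obs_prob_def xhat_def)
  using f1 f2 p by (simp_all add: algebra_simps)
qed

lemma inner_ST:
  assumes "a = None \<or> a = Some True" "R None = None" "R (Some False) = None \<or> R (Some False) = Some False"
    "R (Some True) = None \<or> R (Some True) = Some True"
   and p: "0 < \<mu>0" "\<mu>0 < 1" "0 < \<rho>" "\<rho> < 1" "0 < \<pi>" "\<pi> < 1" "0 < c"
  shows "inner \<mu>0 \<rho> \<pi> c (Some True) a e R \<le> \<pi> * \<mu>0"
proof -
  have f2: "0 \<le> \<mu>0 * \<pi> * \<pi> * (1-\<rho>)" "0 \<le> \<mu>0 * \<pi> * c" "0 \<le> \<mu>0 * \<pi> * \<rho>"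
    "0 \<le> \<mu>0 * \<pi> * (1-\<rho>)"  "0 \<le> \<mu>0 * \<pi> * \<pi> * \<rho>" "0 \<le> \<mu>0 * \<pi> * (1-\<pi>) * (1-\<rho>)"
     "0 \<le> \<mu>0 * \<pi> * (1-\<pi>) * \<rho>" "0 \<le> \<mu>0 * (\<pi> * c)" "\<mu>0*(\<pi>*\<rho>) \<le> \<mu>0*\<pi>" "\<pi>*\<rho> \<le> 1"
     using p by (simp_all add: mult_le_one)
  show ?thesis
  using assms(1-4) unfolding inner_def all_obs_def
  apply (cases e; elim disjE; simp add: UNIV_bool prior_def trans_prob_def obs_prob_def xhat_def)
  using f2 p apply (simp_all add: algebra_simps) apply (use f2 p in linarith)+ done
qed

lemma split_payoff: "agent_payoff \<mu>0 \<rho> \<pi> c (False, r1, e2, r2) =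
  inner \<mu>0 \<rho> \<pi> c None (r1 None) (e2 None) (r2 None) +
  inner \<mu>0 \<rho> \<pi> c (Some False) (r1 (Some False)) (e2 (Some False)) (r2 (Some False)) +
  inner \<mu>0 \<rho> \<pi> c (Some True) (r1 (Some True)) (e2 (Some True)) (r2 (Some True))"
  unfolding agent_payoff_def inner_def
  by (simp add: all_obs_def sum.distrib)

definition sopt :: strategy where
  "sopt = (False, (\<lambda>ob. if ob = Some True then Some True else None), (\<lambda>ob. ob = None),
                (\<lambda>_ o2. if o2 = Some True then Some True else None))"

lemma dev_payoff: "agent_payoff \<mu>0 \<rho> \<pi> c deviation = \<mu>0 + (1-\<mu>0)*(1-\<rho>)*\<pi> - c"
  unfolding agent_payoff_def deviation_def all_obs_def
  by (simp add: UNIV_bool prior_def trans_prob_def obs_prob_def xhat_def algebra_simps)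

lemma opt_payoff: "agent_payoff \<mu>0 \<rho> \<pi> c sopt =
   \<pi> * \<mu>0 + \<pi> * \<pi> * (1-\<mu>0) * (1-\<rho>) + (1-\<pi>) * ((\<rho> * \<mu>0 + (1 - \<rho>) * (1 - \<mu>0)) - c)"
  unfolding agent_payoff_def sopt_def all_obs_def
  by (simp add: UNIV_bool prior_def trans_prob_def obs_prob_def xhat_def algebra_simps)

lemma sopt_feasible: "feasible_strategy sopt \<and> \<not> fst sopt"
  by (auto simp: sopt_def feasible_strategy_def feasible_report_def)

theorem proposition2:
  fixes \<mu>0 \<rho> \<pi> c k :: real
  assumes "0 < \<mu>0" "\<mu>0 < 1"
    and "1/2 < \<rho>" "\<rho> < 1"
    and "0 < \<pi>" "\<pi> < 1"
    and "0 < c" "0 < k"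
    and "1 - \<rho> < k / (1 - \<pi>)"
    and "k / (1 - \<pi>) \<le> min (\<rho> * \<mu>0 + (1 - \<rho>) * (1 - \<mu>0)) (1 - (\<rho> * \<mu>0 + (1 - \<rho>) * (1 - \<mu>0)))"
    and "1 - \<rho> < c / (1 - \<pi>)"
    and "c / (1 - \<pi>) \<le> \<rho> * \<mu>0 + (1 - \<rho>) * (1 - \<mu>0)"
  shows "(\<forall>s. feasible_strategy s \<and> \<not> fst s \<longrightarrow>
            agent_payoff \<mu>0 \<rho> \<pi> c deviation > agent_payoff \<mu>0 \<rho> \<pi> c s)
         \<longleftrightarrow> c / (1 - \<pi>) < (1 - \<rho>) * (\<mu>0 - (1 - \<mu>0) * (1 - \<pi>)) / \<pi>"
proof -
  define B where "B = \<pi> * \<mu>0 + \<pi> * \<pi> * (1-\<mu>0) * (1-\<rho>) + (1-\<pi>) * ((\<rho> * \<mu>0 + (1 - \<rho>) * (1 - \<mu>0)) - c)"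
  define D where "D = \<mu>0 + (1-\<mu>0)*(1-\<rho>)*\<pi> - c"
  have pi1: "0 < 1 - \<pi>" using assms by simp
  have h1: "c \<le> (1-\<pi>) * (\<rho> * \<mu>0 + (1 - \<rho>) * (1 - \<mu>0))"
    using assms(12) pi1 by (simp add: pos_divide_le_eq mult.commute)
  have h2: "(1-\<rho>) * (1-\<pi>) < c"
    using assms(11) pi1 by (simp add: pos_less_divide_eq)
  have p: "0 < \<mu>0" "\<mu>0 < 1" "0 < \<rho>" "\<rho> < 1" "0 < \<pi>" "\<pi> < 1" "0 < c" using assms by auto
  have bound: "agent_payoff \<mu>0 \<rho> \<pi> c s \<le> B" if fs: "feasible_strategy s" "\<not> fst s" for s
  proof -
    obtain e1 r1 e2 r2 where s: "s = (e1, r1, e2, r2)" by (cases s) auto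
    have e1: "\<not> e1" using fs s by simp
    have fr1: "\<And>o1. r1 o1 = None \<or> r1 o1 = o1" and fr2: "\<And>o1 o2. r2 o1 o2 = None \<or> r2 o1 o2 = o2"
      using fs(1) s unfolding feasible_strategy_def feasible_report_def by auto
    have a: "inner \<mu>0 \<rho> \<pi> c None (r1 None) (e2 None) (r2 None) \<le> (1-\<pi>) * ((\<rho> * \<mu>0 + (1 - \<rho>) * (1 - \<mu>0)) - c)"
    proof -
      have "r1 None = None" using fr1[of None] by auto
      thus ?thesis using inner_None[OF _ fr2[of None "Some False"] fr2[of None "Some True"] p h1] fr2[of None None] by auto
    qed
    have b: "inner \<mu>0 \<rho> \<pi> c (Some False) (r1 (Some False)) (e2 (Some False)) (r2 (Some False)) \<le> \<pi> * \<pi> * (1-\<mu>0) * (1-\<rho>)"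
      using inner_SF[OF fr1 _ fr2[of _ "Some False"] fr2[of _ "Some True"] p h2] fr2[of _ None] by auto
    have c: "inner \<mu>0 \<rho> \<pi> c (Some True) (r1 (Some True)) (e2 (Some True)) (r2 (Some True)) \<le> \<pi> * \<mu>0"
      using inner_ST[OF fr1 _ fr2[of _ "Some False"] fr2[of _ "Some True"] p] fr2[of _ None] by auto
    show ?thesis using a b c e1 unfolding s B_def by (simp add: split_payoff)
  qed
  have DB: "D - B = (1-\<pi>) * ((1 - \<rho>) * (\<mu>0 - (1 - \<mu>0) * (1 - \<pi>))) - \<pi> * c"
    unfolding D_def B_def by (simp add: algebra_simps)
  have cond: "c / (1 - \<pi>) < (1 - \<rho>) * (\<mu>0 - (1 - \<mu>0) * (1 - \<pi>)) / \<pi> \<longleftrightarrow> B < D"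
  proof -
    have "c / (1 - \<pi>) < (1 - \<rho>) * (\<mu>0 - (1 - \<mu>0) * (1 - \<pi>)) / \<pi> \<longleftrightarrow>
          \<pi> * c < (1-\<pi>) * ((1 - \<rho>) * (\<mu>0 - (1 - \<mu>0) * (1 - \<pi>)))"
      using pi1 p by (simp add: divide_less_eq less_divide_eq field_simps)
    also have "\<dots> \<longleftrightarrow> B < D" using DB by linarith
    finally show ?thesis .
  qed
  show ?thesis
  proof
    assume H: "\<forall>s. feasible_strategy s \<and> \<not> fst s \<longrightarrow>
            agent_payoff \<mu>0 \<rho> \<pi> c deviation > agent_payoff \<mu>0 \<rho> \<pi> c s"
    have "B < D" using H[rule_format, OF sopt_feasible] by (simp add: dev_payoff opt_payoff B_def D_def)
    thus "c / (1 - \<pi>) < (1 - \<rho>) * (\<mu>0 - (1 - \<mu>0) * (1 - \<pi>)) / \<pi>" using cond by simp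
  next
    assume "c / (1 - \<pi>) < (1 - \<rho>) * (\<mu>0 - (1 - \<mu>0) * (1 - \<pi>)) / \<pi>"
    hence "B < D" using cond by simp
    thus "\<forall>s. feasible_strategy s \<and> \<not> fst s \<longrightarrow>
            agent_payoff \<mu>0 \<rho> \<pi> c deviation > agent_payoff \<mu>0 \<rho> \<pi> c s"
      using bound by (auto simp: dev_payoff D_def) (smt (verit))
  qed
qed

end
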